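(* Let $k\in\mathbb C\setminus\mathbb Q$, let $n,m\in\mathbb Z_{>0}$, and let $p_0=n+k^{-1}m$. Two bipartitions $\alpha=(\lambda,\mu)$ and $\tilde\alpha=(\tilde\lambda,\tilde\mu)$ are $\mathcal E$-equivalent if and only if $$\alpha\setminus\pi=\tilde\alpha\setminus\pi$$ and $$\theta(\lambda\setminus\tilde\lambda)=\mu\setminus\tilde\mu,\qquad \theta(\tilde\lambda\setminus\lambda)=\tilde\mu\setminus\mu .$$
   Context: Partitions are identified with their Young diagrams, i.e. finite sets of boxes $(i,j)\in\mathbb Z_{>0}^2$ ($i$ = row, $j$ = column) closed under moving up or left. A bipartition is a pair $\alpha=(\lambda,\mu)$ of partitions; set-theoretic operations and inclusion of bipartitions are taken componentwise. The content of a box $x=(i,j)$ with parameter $a$ is $c(x,a)=(j-1)+k(i-1)+a$. For $r\ge1$ put $b_r(\alpha,k,p_0)=\sum_{x\in\lambda}c(x,0)^{r-1}+(-1)^r\sum_{y\in\mu}c(y,1+k-kp_0)^{r-1}$. Two bipartitions $\alpha,\tilde\alpha$ are called $\mathcal E$-equivalent (for the given $k,p_0$) if $b_r(\alpha,k,p_0)=b_r(\tilde\alpha,k,p_0)$ for all $r\ge1$. Let $\pi(n,m)=\{(i,j):1\le i\le n,\ 1\le j\le m\}$ be the rectangular diagram, $\pi=(\pi(n,m),\pi(n,m))$, and let $\theta:\pi(n,m)\to\pi(n,m)$ be the central symmetry $\theta(i,j)=(n-i+1,m-j+1)$. *)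

theory Defs
  imports Complex_Main
begin

type_synonym box = "nat \<times> nat"   (* (i,j): i = row, j = column *)

definition is_partition :: "box set \<Rightarrow> bool" where
  "is_partition P \<longleftrightarrow> finite P \<and>
     (\<forall>(i,j)\<in>P. 1 \<le> i \<and> 1 \<le> j) \<and>
     (\<forall>i j i' j'. (i,j) \<in> P \<longrightarrow> 1 \<le> i' \<longrightarrow> i' \<le> i \<longrightarrow> 1 \<le> j' \<longrightarrow> j' \<le> j \<longrightarrow> (i',j') \<in> P)"

type_synonym bipartition = "box set \<times> box set"

definition is_bipartition :: "bipartition \<Rightarrow> bool" where
  "is_bipartition \<alpha> \<longleftrightarrow> is_partition (fst \<alpha>) \<and> is_partition (snd \<alpha>)"

definition content :: "complex \<Rightarrow> box \<Rightarrow> complex \<Rightarrow> complex" where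
  "content k x a = of_nat (snd x - 1) + k * of_nat (fst x - 1) + a"

definition bsum :: "nat \<Rightarrow> bipartition \<Rightarrow> complex \<Rightarrow> complex \<Rightarrow> complex" where
  "bsum r \<alpha> k p0 =
     (\<Sum>x\<in>fst \<alpha>. content k x 0 ^ (r - 1))
     + (-1) ^ r * (\<Sum>y\<in>snd \<alpha>. content k y (1 + k - k * p0) ^ (r - 1))"

definition E_equiv :: "complex \<Rightarrow> complex \<Rightarrow> bipartition \<Rightarrow> bipartition \<Rightarrow> bool" where
  "E_equiv k p0 \<alpha> \<beta> \<longleftrightarrow> (\<forall>r\<ge>1. bsum r \<alpha> k p0 = bsum r \<beta> k p0)"

definition rect :: "nat \<Rightarrow> nat \<Rightarrow> box set" where
  "rect n m = {(i,j). 1 \<le> i \<and> i \<le> n \<and> 1 \<le> j \<and> j \<le> m}"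

definition theta :: "nat \<Rightarrow> nat \<Rightarrow> box \<Rightarrow> box" where
  "theta n m x = (n - fst x + 1, m - snd x + 1)"

definition bidiff :: "bipartition \<Rightarrow> bipartition \<Rightarrow> bipartition" where
  "bidiff \<alpha> \<beta> = (fst \<alpha> - fst \<beta>, snd \<alpha> - snd \<beta>)"

end

theory Submission
  imports Defs
begin

definition fc :: "complex \<Rightarrow> box \<Rightarrow> complex" where
  "fc k x = of_nat (snd x - 1) + k * of_nat (fst x - 1)"

definition gc :: "complex \<Rightarrow> nat \<Rightarrow> nat \<Rightarrow> box \<Rightarrow> complex" where
  "gc k n m y = (of_nat m - of_nat (snd y)) + k * (of_nat n - of_nat (fst y))"

lemma indep:
  assumes "k \<notin> \<rat>" and "of_int a + k * of_int b = of_int c + k * (of_int d :: complex)"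
  shows "a = c \<and> b = d"
proof (cases "b = d")
  case True
  then show ?thesis using assms(2) by simp
next
  case False
  have "k * (of_int b - of_int d) = of_int c - of_int a" using assms(2) by (simp add: algebra_simps)
  then have "k = of_int (c - a) / of_int (b - d)" using False
    by (simp add: field_simps)
  then have "k \<in> \<rat>" by simp
  then show ?thesis using assms(1) by simp
qed

lemma fc_int: "1 \<le> fst x \<Longrightarrow> 1 \<le> snd x \<Longrightarrow>
  fc k x = of_int (int (snd x) - 1) + k * of_int (int (fst x) - 1)"
  unfolding fc_def by (simp add: of_nat_diff)

lemma gc_int: "gc k n m y = of_int (int m - int (snd y)) + k * of_int (int n - int (fst y))"
  unfolding gc_def by simp

lemma F1:
  assumes "k \<notin> \<rat>" "1 \<le> fst x" "1 \<le> snd x" "1 \<le> fst x'" "1 \<le> snd x'"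
  shows "fc k x = fc k x' \<longleftrightarrow> x = x'"
proof
  assume "fc k x = fc k x'"
  then have "int (snd x) - 1 = int (snd x') - 1 \<and> int (fst x) - 1 = int (fst x') - 1"
    using assms by (intro indep[OF assms(1)]) (simp add: fc_int)
  then show "x = x'" by (simp add: prod_eq_iff)
qed simp

lemma F2:
  assumes "k \<notin> \<rat>"
  shows "gc k n m y = gc k n m y' \<longleftrightarrow> y = y'"
proof
  assume "gc k n m y = gc k n m y'"
  then have "int m - int (snd y) = int m - int (snd y') \<and> int n - int (fst y) = int n - int (fst y')"
    by (intro indep[OF assms(1)]) (simp add: gc_int)
  then show "y = y'" by (simp add: prod_eq_iff)
qed simp

lemma F3:
  assumes "k \<notin> \<rat>" "1 \<le> fst x" "1 \<le> snd x" "1 \<le> fst y" "1 \<le> snd y"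
  shows "fc k x = gc k n m y \<longleftrightarrow> (y \<in> rect n m \<and> x = theta n m y)"
proof
  assume "fc k x = gc k n m y"
  then have "int (snd x) - 1 = int m - int (snd y) \<and> int (fst x) - 1 = int n - int (fst y)"
    using assms by (intro indep[OF assms(1)]) (simp add: fc_int gc_int)
  then show "y \<in> rect n m \<and> x = theta n m y" using assms
    by (cases x, cases y) (auto simp: rect_def theta_def)
next
  assume "y \<in> rect n m \<and> x = theta n m y"
  then show "fc k x = gc k n m y" using assms
    by (cases y) (auto simp: rect_def theta_def fc_def gc_def of_nat_diff)
qed


lemma powsum_count:
  fixes f g :: "'a \<Rightarrow> complex"
  assumes fin: "finite A" "finite B" "finite A'" "finite B'"
  and H: "\<And>s. (\<Sum>x\<in>A. f x ^ s) - (\<Sum>y\<in>B. g y ^ s) = (\<Sum>x\<in>A'. f x ^ s) - (\<Sum>y\<in>B'. g y ^ s)"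
  shows "int (card {x\<in>A. f x = z}) - int (card {y\<in>B. g y = z})
       = int (card {x\<in>A'. f x = z}) - int (card {y\<in>B'. g y = z})"
proof -
  define L where "L h = (\<Sum>x\<in>A. h (f x)) - (\<Sum>y\<in>B. h (g y)) - ((\<Sum>x\<in>A'. h (f x)) - (\<Sum>y\<in>B'. h (g y)))"
    for h :: "complex \<Rightarrow> complex"
  have lin: "L (\<lambda>w. h1 w - c * h2 w) = L h1 - c * L h2" for h1 h2 c
    unfolding L_def by (simp add: sum_subtractf sum_distrib_left[symmetric] algebra_simps)
  have L0: "L (\<lambda>w. w ^ s) = 0" for s unfolding L_def using H[of s] by simp
  have LV: "\<forall>s. L (\<lambda>w. w ^ s * (\<Prod>v\<in>V. w - v)) = 0" if "finite V" for V
    using that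
  proof (induction V rule: finite_induct)
    case empty
    then show ?case using L0 by simp
  next
    case (insert u V)
    show ?case
    proof
      fix s
      have "(\<lambda>w. w ^ s * (\<Prod>v\<in>insert u V. w - v))
          = (\<lambda>w. w ^ Suc s * (\<Prod>v\<in>V. w - v) - u * (w ^ s * (\<Prod>v\<in>V. w - v)))"
        using insert by (auto simp: algebra_simps)
      moreover have "L (\<lambda>w. w ^ Suc s * (\<Prod>v\<in>V. w - v) - u * (w ^ s * (\<Prod>v\<in>V. w - v))) = 0"
        using insert.IH by (simp only: lin) simp
      ultimately show "L (\<lambda>w. w ^ s * (\<Prod>v\<in>insert u V. w - v)) = 0"
        by simp
    qed
  qed
  define V where "V = (f ` A \<union> g ` B \<union> f ` A' \<union> g ` B') - {z}"
  have fV: "finite V" unfolding V_def using fin by simp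
  define C where "C = (\<Prod>v\<in>V. z - v)"
  have C0: "C \<noteq> 0" unfolding C_def using fV by (simp add: V_def)
  have pv: "(\<Prod>v\<in>V. w - v) = (if w = z then C else 0)"
    if "w \<in> f ` A \<union> g ` B \<union> f ` A' \<union> g ` B'" for w
  proof (cases "w = z")
    case True then show ?thesis by (simp add: C_def)
  next
    case False
    then have "w \<in> V" using that by (simp add: V_def)
    then show ?thesis using False fV by (simp add: prod_zero_iff)
  qed
  have cnt: "(\<Sum>x\<in>X. (\<Prod>v\<in>V. h x - v)) = C * of_nat (card {x\<in>X. h x = z})"
    if "finite X" "h ` X \<subseteq> f ` A \<union> g ` B \<union> f ` A' \<union> g ` B'" for X h
  proof -
    have "(\<Sum>x\<in>X. (\<Prod>v\<in>V. h x - v)) = (\<Sum>x\<in>X. if h x = z then C else 0)"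
      using that pv by (intro sum.cong) auto
    also have "\<dots> = (\<Sum>x\<in>{x\<in>X. h x = z}. C)"
      using that by (simp only: sum.inter_filter)
    finally show ?thesis by simp
  qed
  have "L (\<lambda>w. w ^ 0 * (\<Prod>v\<in>V. w - v)) = 0" using LV[OF fV] by blast
  then have "C * (of_nat (card {x\<in>A. f x = z}) - of_nat (card {y\<in>B. g y = z})
     - (of_nat (card {x\<in>A'. f x = z}) - of_nat (card {y\<in>B'. g y = z}))) = 0"
    unfolding L_def using fin
    by (simp add: cnt[of A f] cnt[of B g] cnt[of A' f] cnt[of B' g] image_subset_iff algebra_simps)
  then have "(of_int (int (card {x\<in>A. f x = z}) - int (card {y\<in>B. g y = z})) :: complex)
     = of_int (int (card {x\<in>A'. f x = z}) - int (card {y\<in>B'. g y = z}))"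
    using C0 by simp
  then show ?thesis by (simp only: of_int_eq_iff)
qed


definition posset :: "box set \<Rightarrow> bool" where
  "posset P \<longleftrightarrow> (\<forall>x\<in>P. 1 \<le> fst x \<and> 1 \<le> snd x)"

lemma part_posset: "is_partition P \<Longrightarrow> posset P"
  unfolding is_partition_def posset_def by auto

lemma gc_theta: "x \<in> rect n m \<Longrightarrow> gc k n m (theta n m x) = fc k x"
  by (cases x) (auto simp: rect_def theta_def fc_def gc_def of_nat_diff)

lemma theta_rect: "x \<in> rect n m \<Longrightarrow> theta n m x \<in> rect n m \<and> theta n m (theta n m x) = x"
  by (cases x) (auto simp: rect_def theta_def)

lemma inj_theta: "inj_on (theta n m) (rect n m)"
  by (metis inj_onI theta_rect)

lemma bsum_eq:
  assumes "k \<noteq> 0" "is_bipartition \<alpha>"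
  shows "bsum (Suc s) \<alpha> k (of_nat n + of_nat m / k)
       = (\<Sum>x\<in>fst \<alpha>. fc k x ^ s) - (\<Sum>y\<in>snd \<alpha>. gc k n m y ^ s)"
proof -
  have P: "posset (snd \<alpha>)" using assms(2) part_posset unfolding is_bipartition_def by blast
  have c: "content k y (1 + k - k * (of_nat n + of_nat m / k)) = - gc k n m y" if "y \<in> snd \<alpha>" for y
  proof -
    have "1 \<le> fst y" "1 \<le> snd y" using P that unfolding posset_def by auto
    then show ?thesis using assms(1)
      by (simp add: content_def gc_def of_nat_diff field_simps)
  qed
  have "(-1) ^ Suc s * (\<Sum>y\<in>snd \<alpha>. content k y (1 + k - k * (of_nat n + of_nat m / k)) ^ s)
      = (-1) ^ Suc s * (\<Sum>y\<in>snd \<alpha>. (-1) ^ s * gc k n m y ^ s)"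
  proof -
    have "content k y (1 + k - k * (of_nat n + of_nat m / k)) ^ s = (-1) ^ s * gc k n m y ^ s"
      if "y \<in> snd \<alpha>" for y using c[OF that] by (metis power_minus)
    then show ?thesis by (metis (no_types, lifting) sum.cong)
  qed
  also have "\<dots> = ((-1) ^ Suc s * (-1) ^ s) * (\<Sum>y\<in>snd \<alpha>. gc k n m y ^ s)"
    by (simp only: sum_distrib_left[symmetric] mult.assoc)
  also have "(-1) ^ Suc s * (-1) ^ s = (-1 :: complex)"
    by (simp only: power_add[symmetric]) (simp add: power_minus1_odd)
  also have "(-1) * (\<Sum>y\<in>snd \<alpha>. gc k n m y ^ s) = - (\<Sum>y\<in>snd \<alpha>. gc k n m y ^ s)"
    by simp
  finally show ?thesis unfolding bsum_def by (simp add: content_def fc_def)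
qed

lemma half:
  assumes "finite la" "finite mu" "la - la' \<subseteq> rect n m" "theta n m ` (la - la') = mu - mu'"
  shows "(\<Sum>x\<in>la. fc k x ^ s) - (\<Sum>y\<in>mu. gc k n m y ^ s)
       = (\<Sum>x\<in>la \<inter> la'. fc k x ^ s) - (\<Sum>y\<in>mu \<inter> mu'. gc k n m y ^ s)"
proof -
  have "(\<Sum>y\<in>mu - mu'. gc k n m y ^ s) = (\<Sum>x\<in>la - la'. gc k n m (theta n m x) ^ s)"
    using assms(3,4) inj_on_subset[OF inj_theta assms(3)]
    by (metis (no_types, lifting) sum.reindex comp_apply sum.cong)
  also have "\<dots> = (\<Sum>x\<in>la - la'. fc k x ^ s)"
    using assms(3) gc_theta by (intro sum.cong) auto
  finally have e: "(\<Sum>y\<in>mu - mu'. gc k n m y ^ s) = (\<Sum>x\<in>la - la'. fc k x ^ s)" .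
  show ?thesis
    using sum.Int_Diff[OF assms(1), of "\<lambda>x. fc k x ^ s" la']
      sum.Int_Diff[OF assms(2), of "\<lambda>x. gc k n m x ^ s" mu'] e
    by simp
qed


lemma theta_iff:
  "1 \<le> fst x \<Longrightarrow> 1 \<le> snd x \<Longrightarrow>
   (y \<in> rect n m \<and> x = theta n m y) \<longleftrightarrow> (x \<in> rect n m \<and> y = theta n m x)"
  by (cases x, cases y) (auto simp: rect_def theta_def)

lemma cntf:
  assumes "k \<notin> \<rat>" "posset P" "1 \<le> fst x" "1 \<le> snd x"
  shows "card {x'\<in>P. fc k x' = fc k x} = (if x \<in> P then 1 else 0)"
proof -
  have "{x'\<in>P. fc k x' = fc k x} = (if x \<in> P then {x} else {})"
    using F1[OF assms(1) _ _ assms(3,4)] assms(2) unfolding posset_def by auto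
  then show ?thesis by simp
qed

lemma cntg:
  assumes "k \<notin> \<rat>"
  shows "card {y\<in>Q. gc k n m y = gc k n m y0} = (if y0 \<in> Q then 1 else 0)"
proof -
  have "{y\<in>Q. gc k n m y = gc k n m y0} = (if y0 \<in> Q then {y0} else {})"
    using F2[OF assms(1)] by auto
  then show ?thesis by simp
qed

lemma cntfg:
  assumes "k \<notin> \<rat>" "posset Q" "1 \<le> fst x" "1 \<le> snd x"
  shows "card {y\<in>Q. gc k n m y = fc k x} = (if x \<in> rect n m \<and> theta n m x \<in> Q then 1 else 0)"
proof -
  have "{y\<in>Q. gc k n m y = fc k x} = {y\<in>Q. x \<in> rect n m \<and> y = theta n m x}"
    using F3[OF assms(1,3,4)] theta_iff[OF assms(3,4)] assms(2) unfolding posset_def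
    by (metis (no_types, lifting))
  also have "\<dots> = (if x \<in> rect n m \<and> theta n m x \<in> Q then {theta n m x} else {})" by auto
  finally show ?thesis by simp
qed

lemma cntgf:
  assumes "k \<notin> \<rat>" "posset P" "1 \<le> fst y" "1 \<le> snd y"
  shows "card {x\<in>P. fc k x = gc k n m y} = (if y \<in> rect n m \<and> theta n m y \<in> P then 1 else 0)"
proof -
  have "{x\<in>P. fc k x = gc k n m y} = {x\<in>P. y \<in> rect n m \<and> x = theta n m y}"
    using F3[OF assms(1) _ _ assms(3,4)] assms(2) unfolding posset_def
    by (metis (no_types, lifting))
  also have "\<dots> = (if y \<in> rect n m \<and> theta n m y \<in> P then {theta n m y} else {})" by auto
  finally show ?thesis by simp
qed


theorem mainTheorem1:
  fixes k :: complex and n m :: nat and \<alpha> \<beta> :: bipartition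
  assumes "k \<notin> \<rat>" and "n > 0" and "m > 0"
    and "is_bipartition \<alpha>" and "is_bipartition \<beta>"
  shows "E_equiv k (of_nat n + of_nat m / k) \<alpha> \<beta> \<longleftrightarrow>
     (bidiff \<alpha> (rect n m, rect n m) = bidiff \<beta> (rect n m, rect n m) \<and>
      theta n m ` (fst \<alpha> - fst \<beta>) = snd \<alpha> - snd \<beta> \<and>
      theta n m ` (fst \<beta> - fst \<alpha>) = snd \<beta> - snd \<alpha>)"
proof -
  obtain la mu where a: "\<alpha> = (la, mu)" by (cases \<alpha>)
  obtain la' mu' where b: "\<beta> = (la', mu')" by (cases \<beta>)
  have kq: "k \<notin> \<rat>" by fact
  have k0: "k \<noteq> 0" using assms(1) by auto
  have pa: "is_partition la" "is_partition mu" "is_partition la'" "is_partition mu'"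
    using assms(4,5) a b unfolding is_bipartition_def by auto
  then have fin: "finite la" "finite mu" "finite la'" "finite mu'"
    unfolding is_partition_def by auto
  have ps: "posset la" "posset mu" "posset la'" "posset mu'" using pa part_posset by auto
  define S where "S P Q s = (\<Sum>x\<in>P. fc k x ^ s) - (\<Sum>y\<in>Q. gc k n m y ^ s)" for P Q s
  have E: "E_equiv k (of_nat n + of_nat m / k) \<alpha> \<beta> \<longleftrightarrow> (\<forall>s. S la mu s = S la' mu' s)"
  proof
    assume EE: "E_equiv k (of_nat n + of_nat m / k) \<alpha> \<beta>"
    show "\<forall>s. S la mu s = S la' mu' s"
    proof
      fix s
      have "bsum (Suc s) \<alpha> k (of_nat n + of_nat m / k) = bsum (Suc s) \<beta> k (of_nat n + of_nat m / k)"
        using EE unfolding E_equiv_def by simp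
      then show "S la mu s = S la' mu' s"
        unfolding bsum_eq[OF k0 assms(4)] bsum_eq[OF k0 assms(5)] S_def using a b by simp
    qed
  next
    assume H: "\<forall>s. S la mu s = S la' mu' s"
    show "E_equiv k (of_nat n + of_nat m / k) \<alpha> \<beta>"
      unfolding E_equiv_def
    proof (intro allI impI)
      fix r :: nat assume "1 \<le> r"
      then obtain s where r: "r = Suc s" by (metis not0_implies_Suc not_one_le_zero)
      show "bsum r \<alpha> k (of_nat n + of_nat m / k) = bsum r \<beta> k (of_nat n + of_nat m / k)"
        unfolding r bsum_eq[OF k0 assms(4)] bsum_eq[OF k0 assms(5)] using H a b
        unfolding S_def by simp
    qed
  qed
  have BD: "bidiff \<alpha> (rect n m, rect n m) = bidiff \<beta> (rect n m, rect n m) \<longleftrightarrow>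
      (la - rect n m = la' - rect n m \<and> mu - rect n m = mu' - rect n m)"
    using a b by (simp add: bidiff_def)
  show ?thesis
    unfolding E BD using a b
  proof (simp only: fst_conv snd_conv, intro iffI)
    assume H: "\<forall>s. S la mu s = S la' mu' s"
    have cnt: "int (card {x\<in>la. fc k x = z}) - int (card {y\<in>mu. gc k n m y = z})
       = int (card {x\<in>la'. fc k x = z}) - int (card {y\<in>mu'. gc k n m y = z})" for z
      by (rule powsum_count[OF fin]) (use H in \<open>simp add: S_def\<close>)
    have E1: "(if x \<in> la then 1 else 0) - (if x \<in> rect n m \<and> theta n m x \<in> mu then 1 else 0)
      = (if x \<in> la' then 1 else 0) - (if x \<in> rect n m \<and> theta n m x \<in> mu' then 1 else (0::int))"
      if "1 \<le> fst x" "1 \<le> snd x" for x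
      using cnt[of "fc k x"]
      unfolding cntf[OF kq ps(1) that] cntf[OF kq ps(3) that] cntfg[OF kq ps(2) that] cntfg[OF kq ps(4) that]
      by (simp only: if_distrib[of int] of_nat_1 of_nat_0)
    have E2: "(if y \<in> rect n m \<and> theta n m y \<in> la then 1 else 0) - (if y \<in> mu then 1 else 0)
      = (if y \<in> rect n m \<and> theta n m y \<in> la' then 1 else 0) - (if y \<in> mu' then 1 else (0::int))"
      if "1 \<le> fst y" "1 \<le> snd y" for y
      using cnt[of "gc k n m y"]
      unfolding cntgf[OF kq ps(1) that] cntgf[OF kq ps(3) that] cntg[OF kq]
      by (simp only: if_distrib[of int] of_nat_1 of_nat_0)
    have pos: "1 \<le> fst x \<and> 1 \<le> snd x" if "x \<in> la \<or> x \<in> mu \<or> x \<in> la' \<or> x \<in> mu'" for x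
      using ps that unfolding posset_def by auto
    have L1: "la - rect n m = la' - rect n m"
    proof (intro set_eqI iffI)
      fix x assume "x \<in> la - rect n m" then show "x \<in> la' - rect n m"
        using E1[of x] pos[of x] by (auto split: if_splits)
    next
      fix x assume "x \<in> la' - rect n m" then show "x \<in> la - rect n m"
        using E1[of x] pos[of x] by (auto split: if_splits)
    qed
    have L2: "mu - rect n m = mu' - rect n m"
    proof (intro set_eqI iffI)
      fix x assume "x \<in> mu - rect n m" then show "x \<in> mu' - rect n m"
        using E2[of x] pos[of x] by (auto split: if_splits)
    next
      fix x assume "x \<in> mu' - rect n m" then show "x \<in> mu - rect n m"
        using E2[of x] pos[of x] by (auto split: if_splits)
    qed
    have L3: "theta n m ` (la - la') = mu - mu'" if L1': "la - rect n m = la' - rect n m"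
      and L2': "mu - rect n m = mu' - rect n m" and
      E1': "\<And>x. 1 \<le> fst x \<Longrightarrow> 1 \<le> snd x \<Longrightarrow>
        (if x \<in> la then 1 else 0) - (if x \<in> rect n m \<and> theta n m x \<in> mu then 1 else 0)
      = (if x \<in> la' then 1 else 0) - (if x \<in> rect n m \<and> theta n m x \<in> mu' then 1 else (0::int))"
      and pos': "\<And>x. x \<in> la \<or> x \<in> mu \<Longrightarrow> 1 \<le> fst x \<and> 1 \<le> snd x"
      for la mu la' mu'
    proof (intro set_eqI iffI)
      fix y assume "y \<in> theta n m ` (la - la')"
      then obtain x where x: "x \<in> la" "x \<notin> la'" "y = theta n m x" by auto
      then have xr: "x \<in> rect n m" using L1' by blast
      show "y \<in> mu - mu'" using E1'[of x] pos'[of x] x xr by (auto split: if_splits)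
    next
      fix y assume y: "y \<in> mu - mu'"
      then have yr: "y \<in> rect n m" using L2' by blast
      define x where "x = theta n m y"
      have xr: "x \<in> rect n m" and yx: "y = theta n m x" using theta_rect[OF yr] x_def by auto
      then have "1 \<le> fst x" "1 \<le> snd x" by (auto simp: rect_def)
      then have "x \<in> la" "x \<notin> la'" using E1'[of x] y xr yx by (auto split: if_splits)
      then show "y \<in> theta n m ` (la - la')" using yx by blast
    qed
    show "(la - rect n m = la' - rect n m \<and> mu - rect n m = mu' - rect n m) \<and>
        theta n m ` (la - la') = mu - mu' \<and> theta n m ` (la' - la) = mu' - mu"
    proof (intro conjI)
      show "theta n m ` (la - la') = mu - mu'"
        by (rule L3[OF L1 L2 E1]) (use pos in auto)
      show "theta n m ` (la' - la) = mu' - mu"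
        by (rule L3[OF L1[symmetric] L2[symmetric]]) (use E1 pos in \<open>auto simp: algebra_simps\<close>)
    qed (fact L1 L2)+
  next
    assume R: "(la - rect n m = la' - rect n m \<and> mu - rect n m = mu' - rect n m) \<and>
        theta n m ` (la - la') = mu - mu' \<and> theta n m ` (la' - la) = mu' - mu"
    have s1: "la - la' \<subseteq> rect n m" "la' - la \<subseteq> rect n m" using R by blast+
    show "\<forall>s. S la mu s = S la' mu' s"
    proof
      fix s
      show "S la mu s = S la' mu' s"
        unfolding S_def
        using half[OF fin(1,2) s1(1), of mu' k s] half[OF fin(3,4) s1(2), of mu k s] R
        by (simp add: Int_commute)
    qed
  qed
qed

end
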